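(* Every instance of $P_n\,|\,\mathrm{conc}, p_j=1\,|\,*$ in which the objective $*$ is a regular scheduling criterion has an optimal schedule $C$ with $C_{\max}=\max_j C_j\le tw\cdot\log n+1$, where $tw$ is the treewidth of the conflict graph and $n$ the number of jobs.
   Context: In $P_n\,|\,\mathrm{conc}, p_j=1\,|\,*$, jobs $\{1,\dots,n\}$ (possibly with due dates and weights) all have processing time $1$ and release time $0$; there is a conflict graph $G$ on the jobs, and a schedule $C:\{1,\dots,n\}\to\mathbb{N}_{\ge1}$ is feasible iff $C(i)\ne C(j)$ for every edge $\{i,j\}$ of $G$. An optimal schedule is a feasible schedule minimizing the objective. A scheduling criterion is regular if it is non-decreasing in the completion times of the jobs (decreasing a job's completion time never increases the objective value). $\log$ is base $2$. *)

theory Defs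
  imports Complex_Main
begin

definition simple_graph :: "'a set \<Rightarrow> 'a set set \<Rightarrow> bool" where
  "simple_graph V E \<longleftrightarrow> (\<forall>e\<in>E. \<exists>u v. e = {u, v} \<and> u \<noteq> v \<and> u \<in> V \<and> v \<in> V)"

definition connected_in :: "'a set set \<Rightarrow> 'a set \<Rightarrow> bool" where
  "connected_in E S \<longleftrightarrow>
     (\<forall>x\<in>S. \<forall>y\<in>S. (\<lambda>a b. {a, b} \<in> E \<and> a \<in> S \<and> b \<in> S)\<^sup>*\<^sup>* x y)"

definition is_tree :: "'a set \<Rightarrow> 'a set set \<Rightarrow> bool" where
  "is_tree I F \<longleftrightarrow> finite I \<and> I \<noteq> {} \<and> simple_graph I F \<and> connected_in F I
     \<and> card F = card I - 1"

definition tree_decomposition ::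
  "'a set \<Rightarrow> 'a set set \<Rightarrow> nat set \<Rightarrow> nat set set \<Rightarrow> (nat \<Rightarrow> 'a set) \<Rightarrow> bool" where
  "tree_decomposition V E I F B \<longleftrightarrow>
     is_tree I F
     \<and> (\<forall>i\<in>I. B i \<subseteq> V)
     \<and> (\<Union>i\<in>I. B i) = V
     \<and> (\<forall>e\<in>E. \<exists>i\<in>I. e \<subseteq> B i)
     \<and> (\<forall>v\<in>V. connected_in F {i\<in>I. v \<in> B i})"

definition decomposition_width :: "nat set \<Rightarrow> (nat \<Rightarrow> 'a set) \<Rightarrow> nat" where
  "decomposition_width I B = Max ((\<lambda>i. card (B i)) ` I) - 1"

definition treewidth :: "'a set \<Rightarrow> 'a set set \<Rightarrow> nat" where
  "treewidth V E = (LEAST k. \<exists>I F B. tree_decomposition V E I F B \<and> decomposition_width I B = k)"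

text \<open>Scheduling P_n | conc, p_j = 1 | *: jobs {1..n}, conflict graph edges E.\<close>

definition feasible_schedule :: "nat \<Rightarrow> nat set set \<Rightarrow> (nat \<Rightarrow> nat) \<Rightarrow> bool" where
  "feasible_schedule n E C \<longleftrightarrow>
     (\<forall>j\<in>{1..n}. C j \<ge> 1) \<and> (\<forall>i\<in>{1..n}. \<forall>j\<in>{1..n}. {i, j} \<in> E \<and> i \<noteq> j \<longrightarrow> C i \<noteq> C j)"

definition regular_criterion :: "nat \<Rightarrow> ((nat \<Rightarrow> nat) \<Rightarrow> real) \<Rightarrow> bool" where
  "regular_criterion n f \<longleftrightarrow> (\<forall>C C'. (\<forall>j\<in>{1..n}. C' j \<le> C j) \<longrightarrow> f C' \<le> f C)"

definition optimal_schedule :: "nat \<Rightarrow> nat set set \<Rightarrow> ((nat \<Rightarrow> nat) \<Rightarrow> real) \<Rightarrow> (nat \<Rightarrow> nat) \<Rightarrow> bool" where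
  "optimal_schedule n E f C \<longleftrightarrow>
     feasible_schedule n E C \<and> (\<forall>C'. feasible_schedule n E C' \<longrightarrow> f C \<le> f C')"

end

theory Submission
  imports Defs "HOL-Library.FuncSet"
begin


lemma conn_remove_leaf:
  assumes conn: "connected_in F X"
    and leaf: "\<forall>e\<in>F. i \<in> e \<longrightarrow> e = {i, j}" and ij: "i \<noteq> j"
  shows "connected_in (F - {{i, j}}) (X - {i})"
  unfolding connected_in_def
proof (intro ballI)
  fix x y assume x: "x \<in> X - {i}" and y: "y \<in> X - {i}"
  let ?R = "\<lambda>a b. {a, b} \<in> F \<and> a \<in> X \<and> b \<in> X"
  let ?R' = "\<lambda>a b. {a, b} \<in> F - {{i, j}} \<and> a \<in> X - {i} \<and> b \<in> X - {i}"
  have "?R\<^sup>*\<^sup>* x y" using conn x y unfolding connected_in_def by blast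
  then have "(y \<noteq> i \<longrightarrow> ?R'\<^sup>*\<^sup>* x y) \<and> (y = i \<longrightarrow> ?R'\<^sup>*\<^sup>* x j)"
  proof (induction rule: rtranclp_induct)
    case base
    then show ?case using x by auto
  next
    case (step z w)
    show ?case
    proof (cases "w = i")
      case True
      then have "{z, i} \<in> F" using step by auto
      then have "{z, i} = {i, j}" using leaf by auto
      then have "z = j \<or> z = i" by (auto simp: doubleton_eq_iff)
      then show ?thesis using step True by auto
    next
      case False
      show ?thesis
      proof (cases "z = i")
        case True
        then have "{i, w} = {i, j}" using leaf step by auto
        then have "w = j" using False by (auto simp: doubleton_eq_iff)
        then show ?thesis using step True by auto
      next
        case False2: False
        have "{z, w} \<noteq> {i, j}" using False False2 by (auto simp: doubleton_eq_iff)
        then have "?R' z w" using step False False2 by auto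
        moreover have "?R'\<^sup>*\<^sup>* x z" using step.IH False2 by simp
        ultimately have "?R'\<^sup>*\<^sup>* x w" by (rule rtranclp.rtrancl_into_rtrancl[rotated])
        then show ?thesis using False by simp
      qed
    qed
  qed
  then show "?R'\<^sup>*\<^sup>* x y" using y by auto
qed

lemma tree_leaf:
  assumes t: "is_tree I F" and c: "card I \<ge> 2"
  shows "\<exists>i j. i \<in> I \<and> j \<in> I \<and> i \<noteq> j \<and> {i, j} \<in> F \<and> (\<forall>e\<in>F. i \<in> e \<longrightarrow> e = {i, j})"
proof -
  have fI: "finite I" and sg: "simple_graph I F" and cn: "connected_in F I"
    and cF: "card F = card I - 1" using t unfolding is_tree_def by auto
  have FP: "F \<subseteq> Pow I"
  proof
    fix e assume "e \<in> F"
    then obtain u v where "e = {u, v}" "u \<in> I" "v \<in> I" using sg unfolding simple_graph_def by blast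
    then show "e \<in> Pow I" by auto
  qed
  then have fF: "finite F" using fI by (simp add: finite_subset)
  have two: "\<forall>e\<in>F. card {i\<in>I. i \<in> e} = 2"
  proof
    fix e assume "e \<in> F"
    then obtain u v where "e = {u, v}" "u \<noteq> v" "u \<in> I" "v \<in> I" using sg unfolding simple_graph_def by blast
    then have "{i\<in>I. i \<in> e} = {u, v}" by auto
    then show "card {i\<in>I. i \<in> e} = 2" using \<open>u \<noteq> v\<close> by simp
  qed
  have hs: "(\<Sum>i\<in>I. card {e\<in>F. i \<in> e}) = 2 * card F"
    by (rule sum_multicount[OF fI fF two])
  have pos: "card {e\<in>F. i \<in> e} \<ge> 1" if iI: "i \<in> I" for i
  proof -
    obtain y where y: "y \<in> I" "y \<noteq> i"
    proof -
      have "card (I - {i}) \<ge> 1" using c iI by (simp add: card_Diff_singleton)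
      then have "I - {i} \<noteq> {}" by (metis card.empty not_one_le_zero)
      then show ?thesis using that by blast
    qed
    have "(\<lambda>a b. {a, b} \<in> F \<and> a \<in> I \<and> b \<in> I)\<^sup>*\<^sup>* i y" using cn iI y unfolding connected_in_def by blast
    then have "\<exists>w. {i, w} \<in> F"
      by (rule converse_rtranclpE) (use y(2) in auto)
    then obtain w where "{i, w} \<in> F" by blast
    then have "{e\<in>F. i \<in> e} \<noteq> {}" by auto
    moreover have "finite {e\<in>F. i \<in> e}" using fF by auto
    ultimately show ?thesis by (simp add: Suc_leI card_gt_0_iff)
  qed
  obtain i where iI: "i \<in> I" and d1: "card {e\<in>F. i \<in> e} = 1"
  proof (rule ccontr)
    assume nt: "\<not> thesis"
    have "\<forall>i\<in>I. card {e\<in>F. i \<in> e} \<ge> 2"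
    proof
      fix i assume iI: "i \<in> I"
      have "card {e\<in>F. i \<in> e} \<noteq> 1" using that iI nt by blast
      then show "card {e\<in>F. i \<in> e} \<ge> 2" using pos[OF iI] by linarith
    qed
    then have "(\<Sum>i\<in>I. 2) \<le> (\<Sum>i\<in>I. card {e\<in>F. i \<in> e})" by (intro sum_mono) auto
    then have "2 * card I \<le> 2 * card F" using hs by simp
    then show False using cF c by simp
  qed
  then obtain e0 where e0: "{e\<in>F. i \<in> e} = {e0}" by (meson card_1_singletonE)
  then have e0F: "e0 \<in> F" "i \<in> e0" by auto
  then obtain u v where uv: "e0 = {u, v}" "u \<noteq> v" "u \<in> I" "v \<in> I" using sg unfolding simple_graph_def by blast
  obtain j where j: "e0 = {i, j}" "j \<in> I" "i \<noteq> j" using uv e0F by auto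
  show ?thesis
    apply (rule exI[of _ i], rule exI[of _ j])
    using iI j e0F e0 by auto
qed

lemma tree_remove_leaf:
  assumes t: "is_tree I F" and ij: "i \<in> I" "j \<in> I" "i \<noteq> j" "{i, j} \<in> F"
    and leaf: "\<forall>e\<in>F. i \<in> e \<longrightarrow> e = {i, j}"
  shows "is_tree (I - {i}) (F - {{i, j}})"
proof -
  have fI: "finite I" and sg: "simple_graph I F" and cn: "connected_in F I"
    and cF: "card F = card I - 1" using t unfolding is_tree_def by auto
  have "simple_graph (I - {i}) (F - {{i, j}})"
    unfolding simple_graph_def
  proof
    fix e assume e: "e \<in> F - {{i, j}}"
    then obtain u v where "e = {u, v}" "u \<noteq> v" "u \<in> I" "v \<in> I" using sg unfolding simple_graph_def by blast
    moreover have "i \<notin> e" using e leaf by auto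
    ultimately show "\<exists>u v. e = {u, v} \<and> u \<noteq> v \<and> u \<in> I - {i} \<and> v \<in> I - {i}" by auto
  qed
  moreover have "connected_in (F - {{i, j}}) (I - {i})"
    using conn_remove_leaf[OF cn leaf ij(3)] .
  moreover have "card (F - {{i, j}}) = card (I - {i}) - 1"
    using cF ij by (simp add: card_Diff_singleton)
  ultimately show ?thesis using fI ij unfolding is_tree_def by auto
qed

lemma conn_isolated:
  assumes conn: "connected_in F X" and iX: "i \<in> X" and jX: "j \<notin> X"
    and leaf: "\<forall>e\<in>F. i \<in> e \<longrightarrow> e = {i, j}" and ij: "i \<noteq> j"
  shows "X = {i}"
proof -
  have "y = i" if y: "y \<in> X" for y
  proof (rule ccontr)
    assume ne: "y \<noteq> i"
    have "(\<lambda>a b. {a, b} \<in> F \<and> a \<in> X \<and> b \<in> X)\<^sup>*\<^sup>* i y" using conn iX y unfolding connected_in_def by blast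
    then have "\<exists>w. {i, w} \<in> F \<and> w \<in> X"
      by (rule converse_rtranclpE) (use ne in auto)
    then obtain w where w: "{i, w} \<in> F" "w \<in> X" by blast
    then have "{i, w} = {i, j}" using leaf by auto
    then have "w = j \<or> w = i" by (auto simp: doubleton_eq_iff)
    moreover have "w \<noteq> i" using \<open>{i, w} = {i, j}\<close> ij by (auto simp: doubleton_eq_iff)
    ultimately show False using w jX by auto
  qed
  then show ?thesis using iX by blast
qed



lemma degen:
  assumes "is_tree I F" "finite S" "S \<noteq> {}"
    and "\<forall>v\<in>S. connected_in F {i\<in>I. v \<in> B i}"
    and "\<forall>v\<in>S. \<exists>i\<in>I. v \<in> B i"
    and "\<forall>u\<in>S. \<forall>v\<in>S. adj u v \<longrightarrow> (\<exists>i\<in>I. u \<in> B i \<and> v \<in> B i)"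
    and "\<forall>i\<in>I. card (B i \<inter> S) \<le> k + 1"
    and "\<forall>u. \<not> adj u u"
  shows "\<exists>v\<in>S. card {u\<in>S. adj v u} \<le> k"
  using assms
proof (induction "card I" arbitrary: I F rule: less_induct)
  case less
  note t = less.prems(1) and fS = less.prems(2) and ne = less.prems(3)
    and cn = less.prems(4) and cov = less.prems(5) and ecov = less.prems(6)
    and cb = less.prems(7) and irr = less.prems(8)
  have fI: "finite I" "I \<noteq> {}" using t unfolding is_tree_def by auto
  have only: "card {u\<in>S. adj v u} \<le> k" if vS: "v \<in> S" and iI: "i \<in> I" and vi: "v \<in> B i"
    and uniq: "\<forall>i'\<in>I. v \<in> B i' \<longrightarrow> i' = i" for v i
  proof -
    have "{u\<in>S. adj v u} \<subseteq> (B i \<inter> S) - {v}"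
    proof
      fix u assume "u \<in> {u\<in>S. adj v u}"
      then have uS: "u \<in> S" and a: "adj v u" by auto
      then obtain i' where "i' \<in> I" "v \<in> B i'" "u \<in> B i'" using ecov vS by blast
      then have "i' = i" using uniq by auto
      then show "u \<in> (B i \<inter> S) - {v}" using \<open>u \<in> B i'\<close> uS a irr by auto
    qed
    then have "card {u\<in>S. adj v u} \<le> card ((B i \<inter> S) - {v})"
      using fS by (intro card_mono) auto
    also have "\<dots> = card (B i \<inter> S) - 1" using vS vi by (simp add: card_Diff_singleton)
    also have "\<dots> \<le> k" using cb iI by auto
    finally show ?thesis .
  qed
  show ?case
  proof (cases "card I \<ge> 2")
    case False
    then have "card I = 1" using fI by (metis One_nat_def Suc_1 Suc_leI card_gt_0_iff le_antisym not_less_eq_eq)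
    then obtain i where I1: "I = {i}" by (meson card_1_singletonE)
    obtain v where vS: "v \<in> S" using ne by blast
    then have "v \<in> B i" using cov I1 by auto
    moreover have iI: "i \<in> I" using I1 by simp
    moreover have "\<forall>i'\<in>I. v \<in> B i' \<longrightarrow> i' = i" using I1 by simp
    ultimately have "card {u\<in>S. adj v u} \<le> k" using only[OF vS] by blast
    then show ?thesis using vS by blast
  next
    case True
    obtain i j where ij: "i \<in> I" "j \<in> I" "i \<noteq> j" "{i, j} \<in> F"
      and leaf: "\<forall>e\<in>F. i \<in> e \<longrightarrow> e = {i, j}"
      using tree_leaf[OF t True] by blast
    show ?thesis
    proof (cases "\<exists>v\<in>S. v \<in> B i \<and> v \<notin> B j")
      case True
      then obtain v where v: "v \<in> S" "v \<in> B i" "v \<notin> B j" by blast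
      have "{i'\<in>I. v \<in> B i'} = {i}"
        by (rule conn_isolated[OF _ _ _ leaf ij(3)]) (use cn v ij in auto)
      then have "\<forall>i'\<in>I. v \<in> B i' \<longrightarrow> i' = i" by auto
      then show ?thesis using only[OF v(1) ij(1) v(2)] v by auto
    next
      case False
      then have sub: "\<forall>v\<in>S. v \<in> B i \<longrightarrow> v \<in> B j" by auto
      let ?I = "I - {i}" and ?F = "F - {{i, j}}"
      have t': "is_tree ?I ?F" using tree_remove_leaf[OF t ij leaf] .
      have lt: "card ?I < card I" using ij fI by (meson card_Diff1_less)
      have cn': "\<forall>v\<in>S. connected_in ?F {i'\<in>?I. v \<in> B i'}"
      proof
        fix v assume vS: "v \<in> S"
        have "connected_in ?F ({i'\<in>I. v \<in> B i'} - {i})"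
          by (rule conn_remove_leaf[OF _ leaf ij(3)]) (use cn vS in auto)
        moreover have "{i'\<in>I. v \<in> B i'} - {i} = {i'\<in>?I. v \<in> B i'}" by auto
        ultimately show "connected_in ?F {i'\<in>?I. v \<in> B i'}" by simp
      qed
      have cov': "\<forall>v\<in>S. \<exists>i'\<in>?I. v \<in> B i'"
      proof
        fix v assume vS: "v \<in> S"
        then obtain i' where "i' \<in> I" "v \<in> B i'" using cov by blast
        then show "\<exists>i'\<in>?I. v \<in> B i'"
          using sub vS ij by (cases "i' = i") auto
      qed
      have ecov': "\<forall>u\<in>S. \<forall>v\<in>S. adj u v \<longrightarrow> (\<exists>i'\<in>?I. u \<in> B i' \<and> v \<in> B i')"
      proof (intro ballI impI)
        fix u v assume "u \<in> S" "v \<in> S" "adj u v"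
        then obtain i' where "i' \<in> I" "u \<in> B i'" "v \<in> B i'" using ecov by blast
        then show "\<exists>i'\<in>?I. u \<in> B i' \<and> v \<in> B i'"
          using sub \<open>u \<in> S\<close> \<open>v \<in> S\<close> ij by (cases "i' = i") auto
      qed
      have cb': "\<forall>i'\<in>?I. card (B i' \<inter> S) \<le> k + 1" using cb by auto
      show ?thesis using less.hyps[OF lt t' fS ne cn' cov' ecov' cb' irr] .
    qed
  qed
qed



lemma orient_sum:
  assumes deg: "\<forall>S\<subseteq>V. S \<noteq> {} \<longrightarrow> (\<exists>v\<in>S. card {u\<in>S. adj v u} \<le> k)"
    and sym: "\<forall>u v. adj u v \<longrightarrow> adj v u" and irr: "\<forall>u. \<not> adj u u"
    and fV: "finite V"
  shows "S \<subseteq> V \<Longrightarrow> S \<noteq> {} \<Longrightarrow>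
    (\<Sum>x\<in>S. card {y\<in>S. adj x y \<and> (col y::nat) < col x}) \<le> k * (card S - 1)"
proof (induction "card S" arbitrary: S rule: less_induct)
  case less
  have fS: "finite S" using less.prems fV finite_subset by blast
  obtain v where vS: "v \<in> S" and dv: "card {u\<in>S. adj v u} \<le> k" using deg less.prems by blast
  let ?S = "S - {v}"
  let ?h = "\<lambda>T x. card {y\<in>T. adj x y \<and> col y < col x}"
  show ?case
  proof (cases "?S = {}")
    case True
    then have "S = {v}" using vS by auto
    then show ?thesis using irr by simp
  next
    case False
    have lt: "card ?S < card S" using vS fS by (meson card_Diff1_less)
    have IH: "(\<Sum>x\<in>?S. ?h ?S x) \<le> k * (card ?S - 1)"
      using less.hyps[OF lt] less.prems False by auto
    have split: "?h S x = ?h ?S x + (if adj x v \<and> col v < col x then 1 else 0)" if xS: "x \<in> ?S" for x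
    proof -
      have "{y\<in>S. adj x y \<and> col y < col x} = {y\<in>?S. adj x y \<and> col y < col x} \<union>
        (if adj x v \<and> col v < col x then {v} else {})" using vS by auto
      moreover have "finite {y\<in>?S. adj x y \<and> col y < col x}" using fS by auto
      ultimately show ?thesis by (auto simp: card_insert_if)
    qed
    have "(\<Sum>x\<in>S. ?h S x) = ?h S v + (\<Sum>x\<in>?S. ?h S x)"
      using vS fS by (simp add: sum.remove)
    also have "(\<Sum>x\<in>?S. ?h S x) = (\<Sum>x\<in>?S. ?h ?S x) + (\<Sum>x\<in>?S. (if adj x v \<and> col v < col x then 1 else 0))"
      using split by (simp add: sum.distrib)
    also have "(\<Sum>x\<in>?S. (if adj x v \<and> col v < col x then 1 else 0)) = card {x\<in>?S. adj x v \<and> col v < col x}"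
      using fS by (simp add: sum.If_cases Int_def conj_commute set_diff_eq)
    finally have eq: "(\<Sum>x\<in>S. ?h S x) = (\<Sum>x\<in>?S. ?h ?S x) + (?h S v + card {x\<in>?S. adj x v \<and> col v < col x})"
      by simp
    have "?h S v + card {x\<in>?S. adj x v \<and> col v < col x} =
        card ({y\<in>S. adj v y \<and> col y < col v} \<union> {x\<in>?S. adj x v \<and> col v < col x})"
      using fS by (intro card_Un_disjoint[symmetric]) auto
    also have "\<dots> \<le> card {u\<in>S. adj v u}"
      using fS sym by (intro card_mono) auto
    finally have "?h S v + card {x\<in>?S. adj x v \<and> col v < col x} \<le> k" using dv by simp
    moreover have "card ?S > 0" using False fS by (simp add: card_gt_0_iff)
    moreover obtain m where m: "card ?S = Suc m" using calculation(2) gr0_implies_Suc by blast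
    moreover have "card S = Suc (card ?S)" using card.remove[OF fS vS] .
    ultimately have "(\<Sum>x\<in>S. ?h S x) \<le> k * m + k" using eq IH by simp
    then show ?thesis using m \<open>card S = Suc (card ?S)\<close> by simp
  qed
qed

lemma geo_sum:
  fixes k :: real
  assumes k: "k > 0" and ct: "c \<le> t"
  shows "(\<Sum>j\<in>{c<..t}. (1 + 1/k) ^ (t - j)) = k * ((1 + 1/k) ^ (t - c) - 1)"
  using ct
proof (induction rule: inc_induct)
  case base
  then show ?case by simp
next
  case (step m)
  have e: "{m<..t} = insert (Suc m) {Suc m<..t}" using step.hyps by auto
  have "(\<Sum>j\<in>{m<..t}. (1 + 1/k) ^ (t - j)) = (1 + 1/k) ^ (t - Suc m) + k * ((1 + 1/k) ^ (t - Suc m) - 1)"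
    unfolding e using step.IH by simp
  also have "\<dots> = k * ((1 + 1/k) * (1 + 1/k) ^ (t - Suc m) - 1)"
    using k by (simp add: field_simps)
  also have "(1 + 1/k) * (1 + 1/k) ^ (t - Suc m) = (1 + 1/k) ^ (t - m)"
    using step.hyps by (metis Suc_diff_Suc power_Suc)
  finally show ?case .
qed

lemma level_bound:
  fixes k :: real and a :: "nat \<Rightarrow> real"
  assumes k: "k > 0"
    and rec: "\<forall>c. 1 \<le> c \<longrightarrow> c \<le> t \<longrightarrow> (\<Sum>j\<in>{c<..t}. a j) \<le> k * (a c - 1)"
  shows "1 \<le> c \<Longrightarrow> c \<le> t \<Longrightarrow> (1 + 1/k) ^ (t - c) \<le> a c"
proof (induction "t - c" arbitrary: c rule: less_induct)
  case less
  have "(\<Sum>j\<in>{c<..t}. (1 + 1/k) ^ (t - j)) \<le> (\<Sum>j\<in>{c<..t}. a j)"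
  proof (rule sum_mono)
    fix j assume "j \<in> {c<..t}"
    then show "(1 + 1/k) ^ (t - j) \<le> a j" using less by (intro less.hyps) auto
  qed
  also have "\<dots> \<le> k * (a c - 1)" using rec less.prems by auto
  finally have "k * ((1 + 1/k) ^ (t - c) - 1) \<le> k * (a c - 1)"
    using geo_sum[OF k less.prems(2)] by simp
  then show ?case using k by simp
qed



lemma grundy_bound:
  fixes col :: "'a \<Rightarrow> nat"
  assumes fV: "finite V"
    and deg: "\<forall>S\<subseteq>V. S \<noteq> {} \<longrightarrow> (\<exists>v\<in>S. card {u\<in>S. adj v u} \<le> k)"
    and sym: "\<forall>u v. adj u v \<longrightarrow> adj v u" and irr: "\<forall>u. \<not> adj u u"
    and pos: "\<forall>x\<in>V. col x \<ge> 1"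
    and gr: "\<forall>x\<in>V. \<forall>c. 1 \<le> c \<longrightarrow> c < col x \<longrightarrow> (\<exists>y\<in>V. adj x y \<and> col y = c)"
    and xV: "x \<in> V"
  shows "real (col x) \<le> real k * log 2 (real (card V)) + 1"
proof -
  define t where "t = Max (col ` V)"
  have Vne: "V \<noteq> {}" using xV by auto
  have colt: "col y \<le> t" if "y \<in> V" for y unfolding t_def using fV that by auto
  obtain x0 where x0: "x0 \<in> V" "col x0 = t" unfolding t_def using fV Vne
    by (metis (mono_tags, lifting) Max_in finite_imageI image_iff image_is_empty)
  have t1: "t \<ge> 1" using pos x0 by auto
  define S where "S c = {y\<in>V. c \<le> col y}" for c
  have key: "(\<Sum>j\<in>{c<..t}. card (S j)) \<le> k * (card (S c) - 1)" if c: "1 \<le> c" "c \<le> t" for c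
  proof -
    have Ssub: "S c \<subseteq> V" and Sne: "S c \<noteq> {}" using x0 c unfolding S_def by auto
    have fSc: "finite (S c)" using fV Ssub finite_subset by blast
    have hge: "col y - c \<le> card {z\<in>S c. adj y z \<and> col z < col y}" if yS: "y \<in> S c" for y
    proof -
      have "{c..<col y} \<subseteq> col ` {z\<in>S c. adj y z \<and> col z < col y}"
      proof
        fix d assume d: "d \<in> {c..<col y}"
        have "y \<in> V" "1 \<le> d" "d < col y" using yS d c unfolding S_def by auto
        then obtain z where "z \<in> V" "adj y z" "col z = d" using gr by blast
        then show "d \<in> col ` {z\<in>S c. adj y z \<and> col z < col y}" using d unfolding S_def by auto
      qed
      then have "card {c..<col y} \<le> card (col ` {z\<in>S c. adj y z \<and> col z < col y})"
        using fSc by (intro card_mono) auto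
      also have "\<dots> \<le> card {z\<in>S c. adj y z \<and> col z < col y}" using fSc by (intro card_image_le) auto
      finally show ?thesis by simp
    qed
    have "(\<Sum>j\<in>{c<..t}. card {y\<in>S c. j \<le> col y}) = (\<Sum>y\<in>S c. card {j\<in>{c<..t}. j \<le> col y})"
      by (rule sum_multicount_gen) (use fSc in auto)
    also have "\<dots> = (\<Sum>y\<in>S c. col y - c)"
    proof (rule sum.cong)
      fix y assume "y \<in> S c"
      then have "{j\<in>{c<..t}. j \<le> col y} = {c<..col y}" using colt unfolding S_def by force
      then show "card {j\<in>{c<..t}. j \<le> col y} = col y - c" by simp
    qed simp
    also have "\<dots> \<le> (\<Sum>y\<in>S c. card {z\<in>S c. adj y z \<and> col z < col y})"
      using hge by (intro sum_mono) auto
    also have "\<dots> \<le> k * (card (S c) - 1)"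
      using orient_sum[OF deg sym irr fV Ssub Sne] .
    finally have A: "(\<Sum>j\<in>{c<..t}. card {y\<in>S c. j \<le> col y}) \<le> k * (card (S c) - 1)" .
    have "(\<Sum>j\<in>{c<..t}. card {y\<in>S c. j \<le> col y}) = (\<Sum>j\<in>{c<..t}. card (S j))"
      by (rule sum.cong) (auto simp: S_def intro!: arg_cong[where f=card])
    then show ?thesis using A by simp
  qed
  have S1: "S 1 = V" using pos unfolding S_def by auto
  show ?thesis
  proof (cases "k = 0")
    case True
    have "t \<le> 1"
    proof (rule ccontr)
      assume "\<not> t \<le> 1"
      then have "t \<in> {1<..t}" by auto
      have "S t \<noteq> {}" using x0 unfolding S_def by auto
      moreover have "finite (S t)" using fV unfolding S_def by auto
      ultimately have "card (S t) \<ge> 1" by (simp add: Suc_leI card_gt_0_iff)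
      moreover have "card (S t) \<le> (\<Sum>j\<in>{1<..t}. card (S j))"
        using \<open>t \<in> {1<..t}\<close> by (intro member_le_sum) auto
      ultimately show False using key[of 1] True t1 by simp
    qed
    then show ?thesis using colt[OF xV] True by simp
  next
    case False
    then have kp: "real k > 0" by simp
    have rec: "\<forall>c. 1 \<le> c \<longrightarrow> c \<le> t \<longrightarrow> (\<Sum>j\<in>{c<..t}. real (card (S j))) \<le> real k * (real (card (S c)) - 1)"
    proof (intro allI impI)
      fix c assume c: "1 \<le> c" "c \<le> t"
      have "S c \<noteq> {}" "finite (S c)" using x0 c fV unfolding S_def by auto
      then have ge: "card (S c) \<ge> 1" by (simp add: Suc_leI card_gt_0_iff)
      have "real (\<Sum>j\<in>{c<..t}. card (S j)) \<le> real (k * (card (S c) - 1))"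
        using key[OF c] by linarith
      then show "(\<Sum>j\<in>{c<..t}. real (card (S j))) \<le> real k * (real (card (S c)) - 1)"
        using ge by (simp add: of_nat_diff)
    qed
    have lb: "(1 + 1 / real k) ^ (t - 1) \<le> real (card V)"
      using level_bound[OF kp rec, of 1] t1 S1 by simp
    define q where "q = 1 + 1 / real k"
    have q2: "2 \<le> q ^ k"
    proof -
      have "1 + real k * (1 / real k) \<le> (1 + 1 / real k) ^ k"
        by (rule Bernoulli_inequality) (smt (verit) kp divide_nonneg_nonneg of_nat_0_le_iff)
      then show ?thesis using kp unfolding q_def by simp
    qed
    have q1: "q \<ge> 1" unfolding q_def by simp
    have "(2::real) ^ (t - 1) \<le> (q ^ k) ^ (t - 1)"
      using q2 by (intro power_mono) auto
    also have "\<dots> = (q ^ (t - 1)) ^ k" by (simp flip: power_mult add: mult.commute)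
    also have "\<dots> \<le> real (card V) ^ k"
      using lb q1 unfolding q_def by (intro power_mono) auto
    finally have P: "(2::real) ^ (t - 1) \<le> real (card V) ^ k" .
    have cV: "real (card V) > 0" using fV Vne by (simp add: card_gt_0_iff)
    have "log 2 ((2::real) ^ (t - 1)) \<le> log 2 (real (card V) ^ k)"
      using P cV by (intro log_mono) auto
    then have "real (t - 1) \<le> real k * log 2 (real (card V))"
      by (simp add: log_nat_power)
    then have "real t \<le> real k * log 2 (real (card V)) + 1" using t1 by (simp add: of_nat_diff)
    then show ?thesis using colt[OF xV] by linarith
  qed
qed



definition grundy_cond :: "nat \<Rightarrow> nat set set \<Rightarrow> (nat \<Rightarrow> nat) \<Rightarrow> bool" where
  "grundy_cond n E C \<longleftrightarrow> (\<forall>j\<in>{1..n}. \<forall>c. 1 \<le> c \<longrightarrow> c < C j \<longrightarrow>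
     (\<exists>u\<in>{1..n}. {j, u} \<in> E \<and> u \<noteq> j \<and> C u = c))"

lemma compress:
  "feasible_schedule n E C' \<Longrightarrow>
   \<exists>C. feasible_schedule n E C \<and> grundy_cond n E C \<and> (\<forall>j\<in>{1..n}. C j \<le> C' j)"
proof (induction "\<Sum>j\<in>{1..n}. C' j" arbitrary: C' rule: less_induct)
  case less
  show ?case
  proof (cases "grundy_cond n E C'")
    case True
    then show ?thesis using less.prems by blast
  next
    case False
    then obtain j c where j: "j \<in> {1..n}" and c: "1 \<le> c" "c < C' j"
      and no: "\<not> (\<exists>u\<in>{1..n}. {j, u} \<in> E \<and> u \<noteq> j \<and> C' u = c)"
      unfolding grundy_cond_def by blast
    define C'' where "C'' = C'(j := c)"
    have feas: "feasible_schedule n E C''"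
      using less.prems no c unfolding feasible_schedule_def C''_def
      by (auto simp: insert_commute)
    have "(\<Sum>i\<in>{1..n}. C'' i) < (\<Sum>i\<in>{1..n}. C' i)"
    proof -
      have "(\<Sum>i\<in>{1..n}. C'' i) = C'' j + (\<Sum>i\<in>{1..n} - {j}. C'' i)"
        using j by (simp add: sum.remove)
      also have "(\<Sum>i\<in>{1..n} - {j}. C'' i) = (\<Sum>i\<in>{1..n} - {j}. C' i)"
        unfolding C''_def by (rule sum.cong) auto
      also have "C'' j + (\<Sum>i\<in>{1..n} - {j}. C' i) < C' j + (\<Sum>i\<in>{1..n} - {j}. C' i)"
        unfolding C''_def using c by simp
      also have "\<dots> = (\<Sum>i\<in>{1..n}. C' i)" using j by (simp add: sum.remove)
      finally show ?thesis .
    qed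
    then obtain C where "feasible_schedule n E C" "grundy_cond n E C" "\<forall>i\<in>{1..n}. C i \<le> C'' i"
      using less.hyps feas by blast
    moreover have "\<forall>i\<in>{1..n}. C'' i \<le> C' i" unfolding C''_def using c by auto
    ultimately show ?thesis by (meson le_trans)
  qed
qed

lemma grundy_le_n:
  assumes "grundy_cond n E C" "j \<in> {1..n}" "feasible_schedule n E C"
  shows "C j \<le> n"
proof -
  have "{1..<C j} \<subseteq> C ` ({1..n} - {j})"
  proof
    fix c assume "c \<in> {1..<C j}"
    then obtain u where "u \<in> {1..n}" "u \<noteq> j" "C u = c" using assms(1,2) unfolding grundy_cond_def by force
    then show "c \<in> C ` ({1..n} - {j})" by auto
  qed
  then have "card {1..<C j} \<le> card (C ` ({1..n} - {j}))" by (intro card_mono) auto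
  also have "\<dots> \<le> card ({1..n} - {j})" by (intro card_image_le) auto
  also have "\<dots> = n - 1" using assms(2) by simp
  finally have "C j - 1 \<le> n - 1" by simp
  moreover have "C j \<ge> 1" using assms(2,3) unfolding feasible_schedule_def by auto
  ultimately show ?thesis using assms(2) by auto
qed

theorem corollary2:
  fixes n :: nat and E :: "nat set set" and f :: "(nat \<Rightarrow> nat) \<Rightarrow> real"
  assumes "simple_graph {1..n} E"
    and "regular_criterion n f"
  shows "\<exists>C. optimal_schedule n E f C \<and>
           (\<forall>j\<in>{1..n}. real (C j) \<le> real (treewidth {1..n} E) * log 2 (real n) + 1)"
proof -
  note sg = assms(1) and reg = assms(2)
  define tw where "tw = treewidth {1..n} E"
  have ex: "\<exists>k I F B. tree_decomposition {1..n} E I F B \<and> decomposition_width I B = k"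
  proof (intro exI conjI)
    show "tree_decomposition {1..n} E {0} {} (\<lambda>_. {1..n})"
      using sg unfolding tree_decomposition_def is_tree_def simple_graph_def connected_in_def
      by auto
  qed (rule refl)
  obtain I F B where td: "tree_decomposition {1..n} E I F B" and dw: "decomposition_width I B = tw"
    using LeastI_ex[OF ex] unfolding tw_def treewidth_def by blast
  have t: "is_tree I F" using td by (simp add: tree_decomposition_def)
  have tdB: "\<forall>i\<in>I. B i \<subseteq> {1..n}" using td by (simp add: tree_decomposition_def)
  have tdU: "(\<Union>i\<in>I. B i) = {1..n}" using td by (simp add: tree_decomposition_def)
  have tdE: "\<forall>e\<in>E. \<exists>i\<in>I. e \<subseteq> B i" using td by (simp add: tree_decomposition_def)
  have tdC: "\<forall>v\<in>{1..n}. connected_in F {i\<in>I. v \<in> B i}" using td by (simp add: tree_decomposition_def)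
  have fI: "finite I" using t unfolding is_tree_def by auto
  have bag: "card (B i) \<le> tw + 1" if "i \<in> I" for i
  proof -
    have "card (B i) \<le> Max ((\<lambda>i. card (B i)) ` I)" using fI that by auto
    then show ?thesis using dw unfolding decomposition_width_def by linarith
  qed
  define adj where "adj u v \<longleftrightarrow> {u, v} \<in> E \<and> u \<noteq> v" for u v :: nat
  have deg: "\<forall>S\<subseteq>{1..n}. S \<noteq> {} \<longrightarrow> (\<exists>v\<in>S. card {u\<in>S. adj v u} \<le> tw)"
  proof (intro allI impI)
    fix S assume S: "S \<subseteq> {1..n}" "S \<noteq> {}"
    have fS: "finite S" using S finite_subset by blast
    show "\<exists>v\<in>S. card {u\<in>S. adj v u} \<le> tw"
    proof (rule degen[OF t fS S(2)])
      show "\<forall>v\<in>S. connected_in F {i \<in> I. v \<in> B i}"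
      proof
        fix v assume "v \<in> S"
        then have "v \<in> {1..n}" using S(1) by blast
        then show "connected_in F {i \<in> I. v \<in> B i}" by (rule bspec[OF tdC])
      qed
      show "\<forall>v\<in>S. \<exists>i\<in>I. v \<in> B i"
      proof
        fix v assume "v \<in> S"
        then have "v \<in> (\<Union>i\<in>I. B i)" using S(1) tdU by (simp add: subset_iff)
        then show "\<exists>i\<in>I. v \<in> B i" by (simp only: UN_iff)
      qed
      show "\<forall>u\<in>S. \<forall>v\<in>S. adj u v \<longrightarrow> (\<exists>i\<in>I. u \<in> B i \<and> v \<in> B i)"
      proof (intro ballI impI)
        fix u v assume "adj u v"
        then have "{u, v} \<in> E" unfolding adj_def by simp
        then obtain i where "i \<in> I" "{u, v} \<subseteq> B i" using tdE by blast
        then show "\<exists>i\<in>I. u \<in> B i \<and> v \<in> B i" by blast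
      qed
      show "\<forall>i\<in>I. card (B i \<inter> S) \<le> tw + 1"
      proof
        fix i assume iI: "i \<in> I"
        have "B i \<subseteq> {1..n}" using tdB iI by blast
        then have "finite (B i)" using finite_subset by blast
        then have "card (B i \<inter> S) \<le> card (B i)" by (intro card_mono) auto
        then show "card (B i \<inter> S) \<le> tw + 1" using bag[OF iI] by linarith
      qed
      show "\<forall>u. \<not> adj u u" unfolding adj_def by auto
    qed
  qed
  have sym: "\<forall>u v. adj u v \<longrightarrow> adj v u" unfolding adj_def by (auto simp: insert_commute)
  have irr: "\<forall>u. \<not> adj u u" unfolding adj_def by auto
  have dep: "f C = f C'" if "\<forall>j\<in>{1..n}. C j = C' j" for C C'
    using reg that unfolding regular_criterion_def by (metis order.antisym order.refl)
  define Cand where "Cand = {C \<in> PiE {1..n} (\<lambda>_. {1..n}). feasible_schedule n E C \<and> grundy_cond n E C}"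
  have "Cand \<subseteq> PiE {1..n} (\<lambda>_. {1..n})" unfolding Cand_def by blast
  moreover have "finite (PiE {1..n} (\<lambda>_::nat. {1..n::nat}))" by (rule finite_PiE) auto
  ultimately have fC: "finite Cand" by (rule finite_subset)
  have toC: "\<exists>C\<in>Cand. f C \<le> f C'" if feas: "feasible_schedule n E C'" for C'
  proof -
    obtain C where C: "feasible_schedule n E C" "grundy_cond n E C" "\<forall>j\<in>{1..n}. C j \<le> C' j"
      using compress[OF feas] by blast
    define D where "D = restrict C {1..n}"
    have "feasible_schedule n E D" using C(1) unfolding D_def feasible_schedule_def by auto
    moreover have "grundy_cond n E D" using C(2) unfolding D_def grundy_cond_def by auto
    moreover have "D \<in> PiE {1..n} (\<lambda>_. {1..n})"
      using grundy_le_n[OF C(2) _ C(1)] C(1) unfolding D_def feasible_schedule_def by auto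
    ultimately have DC: "D \<in> Cand" unfolding Cand_def by auto
    have "f D = f C" by (rule dep) (auto simp: D_def)
    also have "f C \<le> f C'" using reg C(3) unfolding regular_criterion_def by blast
    finally have fD: "f D \<le> f C'" .
    then show ?thesis using DC by blast
  qed
  have "feasible_schedule n E (\<lambda>j. j)" unfolding feasible_schedule_def by auto
  then obtain C0 where "C0 \<in> Cand" using toC by blast
  then have neC: "Cand \<noteq> {}" by auto
  define m where "m = Min (f ` Cand)"
  have "m \<in> f ` Cand" unfolding m_def by (rule Min_in) (use fC neC in auto)
  then obtain Cs where Cs1: "Cs \<in> Cand" and fm: "f Cs = m" by blast
  have Cs2: "\<forall>C\<in>Cand. f Cs \<le> f C"
  proof
    fix C assume "C \<in> Cand"
    then have "f C \<in> f ` Cand" by blast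
    then have "Min (f ` Cand) \<le> f C" using fC by (intro Min_le) auto
    then show "f Cs \<le> f C" using fm unfolding m_def by simp
  qed
  note Cs = Cs1 Cs2
  have opt: "optimal_schedule n E f Cs"
    unfolding optimal_schedule_def
  proof (intro conjI allI impI)
    show "feasible_schedule n E Cs" using Cs unfolding Cand_def by auto
    fix C' assume "feasible_schedule n E C'"
    then obtain C where "C \<in> Cand" "f C \<le> f C'" using toC by blast
    then show "f Cs \<le> f C'" using Cs by fastforce
  qed
  have bound: "real (Cs j) \<le> real tw * log 2 (real n) + 1" if j: "j \<in> {1..n}" for j
  proof -
    have gc: "grundy_cond n E Cs" and fe: "feasible_schedule n E Cs" using Cs unfolding Cand_def by auto
    have "real (Cs j) \<le> real tw * log 2 (real (card {1..n})) + 1"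
    proof (rule grundy_bound[OF _ deg sym irr _ _ j])
      show "\<forall>x\<in>{1..n}. Cs x \<ge> 1" using fe unfolding feasible_schedule_def by auto
      show "\<forall>x\<in>{1..n}. \<forall>c. 1 \<le> c \<longrightarrow> c < Cs x \<longrightarrow> (\<exists>y\<in>{1..n}. adj x y \<and> Cs y = c)"
        using gc unfolding grundy_cond_def adj_def by (metis insert_commute)
    qed simp
    then show ?thesis by simp
  qed
  show ?thesis using opt bound unfolding tw_def by blast
qed

end
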